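(* Let $d$ be a positive square-free integer with $d\equiv 7\pmod 8$, $K=\mathbb{Q}[\sqrt{-d}]$ with ring of integers $\mathfrak{o}_K$, and $L=\mathbb{Q}[\sqrt{2d}]$ (where $2d$ is square-free) with ring of integers $\mathfrak{o}_L$. Let $\xi,\psi,\phi$ be pairwise distinct elements of $\{1,i,j,k\}$ and $p,m\in\mathbb{Z}$. Then the following are equivalent: (i) $u:=m\sqrt{-d}\,\xi+p\psi+(1-p)\phi\in\mathcal{U}(\mathbb{H}(\mathfrak{o}_K))$; (ii) $\epsilon:=(2p-1)+m\sqrt{2d}\in\mathcal{U}(\mathfrak{o}_L)$.
   Context: $\mathbb{H}(K)=\left(\frac{-1,-1}{K}\right)$ is the quaternion algebra over $K$ with $K$-basis $1,i,j,k$, $i^2=j^2=-1$, $k=ji=-ij$; $\mathbb{H}(\mathfrak{o}_K)$ is the set of $\mathfrak{o}_K$-linear combinations of $1,i,j,k$. *)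

theory Defs
  imports "HOL-Computational_Algebra.Computational_Algebra"
begin

(* Quaternions a + b i + c j + e k over a commutative ring, with
   i^2 = j^2 = -1 and k = j i = - i j  (the convention of the paper). *)
datatype 'a quat = Quat 'a 'a 'a 'a

fun qre :: "'a quat \<Rightarrow> 'a" where "qre (Quat a b c e) = a"
fun qi :: "'a quat \<Rightarrow> 'a" where "qi (Quat a b c e) = b"
fun qj :: "'a quat \<Rightarrow> 'a" where "qj (Quat a b c e) = c"
fun qk :: "'a quat \<Rightarrow> 'a" where "qk (Quat a b c e) = e"

definition qadd :: "'a::comm_ring_1 quat \<Rightarrow> 'a quat \<Rightarrow> 'a quat" where
  "qadd x y = Quat (qre x + qre y) (qi x + qi y) (qj x + qj y) (qk x + qk y)"

definition qscale :: "'a::comm_ring_1 \<Rightarrow> 'a quat \<Rightarrow> 'a quat" where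
  "qscale s x = Quat (s * qre x) (s * qi x) (s * qj x) (s * qk x)"

definition qmult :: "'a::comm_ring_1 quat \<Rightarrow> 'a quat \<Rightarrow> 'a quat" where
  "qmult x y = Quat
     (qre x * qre y - qi x * qi y - qj x * qj y - qk x * qk y)
     (qre x * qi y + qi x * qre y - qj x * qk y + qk x * qj y)
     (qre x * qj y + qj x * qre y + qi x * qk y - qk x * qi y)
     (qre x * qk y + qk x * qre y - qi x * qj y + qj x * qi y)"

definition qone :: "'a::comm_ring_1 quat" where "qone = Quat 1 0 0 0"

definition qbasis :: "nat \<Rightarrow> 'a::comm_ring_1 quat" where
  "qbasis n = (if n = 0 then Quat 1 0 0 0 else if n = 1 then Quat 0 1 0 0
               else if n = 2 then Quat 0 0 1 0 else Quat 0 0 0 1)"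

definition quat_over :: "'a::comm_ring_1 set \<Rightarrow> 'a quat set" where
  "quat_over R = {x. qre x \<in> R \<and> qi x \<in> R \<and> qj x \<in> R \<and> qk x \<in> R}"

definition quat_units :: "'a::comm_ring_1 set \<Rightarrow> 'a quat set" where
  "quat_units R = {x \<in> quat_over R. \<exists>y \<in> quat_over R. qmult x y = qone \<and> qmult y x = qone}"

definition ring_units :: "'a::comm_ring_1 set \<Rightarrow> 'a set" where
  "ring_units R = {x \<in> R. \<exists>y \<in> R. x * y = 1}"

definition sqrt_neg :: "int \<Rightarrow> complex" where
  "sqrt_neg d = \<i> * complex_of_real (sqrt (real_of_int d))"

definition imag_field :: "int \<Rightarrow> complex set" where
  "imag_field d = {of_rat a + of_rat b * sqrt_neg d | a b. True}"

definition imag_ring_of_integers :: "int \<Rightarrow> complex set" where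
  "imag_ring_of_integers d = {x \<in> imag_field d. algebraic_int x}"

definition real_field :: "int \<Rightarrow> real set" where
  "real_field n = {of_rat a + of_rat b * sqrt (real_of_int n) | a b. True}"

definition real_ring_of_integers :: "int \<Rightarrow> real set" where
  "real_ring_of_integers n = {x \<in> real_field n. algebraic_int x}"

end

theory Submission imports Defs begin


definition qnorm :: "'a::comm_ring_1 quat \<Rightarrow> 'a" where
  "qnorm x = qre x ^ 2 + qi x ^ 2 + qj x ^ 2 + qk x ^ 2"
definition qconj :: "'a::comm_ring_1 quat \<Rightarrow> 'a quat" where
  "qconj x = Quat (qre x) (- qi x) (- qj x) (- qk x)"
definition qcomps :: "'a quat \<Rightarrow> 'a list" where
  "qcomps x = [qre x, qi x, qj x, qk x]"

lemma qmult_conj: "qmult x (qconj x) = Quat (qnorm x) 0 0 0"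
  by (cases x) (simp add: qmult_def qconj_def qnorm_def power2_eq_square algebra_simps)
lemma qmult_conj2: "qmult (qconj x) x = Quat (qnorm x) 0 0 0"
  by (cases x) (simp add: qmult_def qconj_def qnorm_def power2_eq_square algebra_simps)
lemma qmult_conj_assoc: "qmult (qconj x) (qmult x y) = qscale (qnorm x) y"
  by (cases x; cases y) (simp add: qmult_def qconj_def qnorm_def qscale_def power2_eq_square algebra_simps)
lemma qmult_one: "qmult x qone = x"
  by (cases x) (simp add: qmult_def qone_def)

lemma comp_lemma:
  fixes tA tB tC :: "'a::comm_ring_1" and a b c :: nat
  assumes "a \<in> {0..3}" and "b \<in> {0..3}" and "c \<in> {0..3}"
    and "a \<noteq> b" and "a \<noteq> c" and "b \<noteq> c"
  defines "u \<equiv> qadd (qadd (qscale tA (qbasis a)) (qscale tB (qbasis b))) (qscale tC (qbasis c))"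
  shows "set (qcomps u) \<subseteq> {0, tA, tB, tC}" "tB \<in> set (qcomps u)" "tC \<in> set (qcomps u)"
    "qnorm u = tA^2 + tB^2 + tC^2"
proof -
  have "a = 0 \<or> a = 1 \<or> a = 2 \<or> a = 3" "b = 0 \<or> b = 1 \<or> b = 2 \<or> b = 3" "c = 0 \<or> c = 1 \<or> c = 2 \<or> c = 3"
    using assms by auto
  then show "set (qcomps u) \<subseteq> {0, tA, tB, tC}" "tB \<in> set (qcomps u)" "tC \<in> set (qcomps u)"
    "qnorm u = tA^2 + tB^2 + tC^2"
    using assms by (auto simp: u_def qcomps_def qnorm_def qadd_def qscale_def qbasis_def add_ac)
qed

lemma parity:
  fixes d p m :: int
  assumes "d mod 8 = 7"
  shows "2*p^2 - 2*p + 1 - m^2*d \<noteq> 0" "2*p^2 - 2*p + 1 - m^2*d \<noteq> -1"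
proof -
  obtain e where d: "d = 8*e + 7" using assms by (metis add.commute mult.commute mult_div_mod_eq)
  obtain s where p: "p = 2*s \<or> p = 2*s+1" by (metis evenE oddE)
  obtain t where m: "m = 2*t \<or> m = 2*t+1" by (metis evenE oddE)
  have "\<exists>K. 2*p^2 - 2*p + 1 - m^2*d = 4*K+1 \<or> 2*p^2 - 2*p + 1 - m^2*d = 4*K+2"
  proof -
    from p m consider "p = 2*s" "m = 2*t" | "p = 2*s" "m = 2*t+1" | "p = 2*s+1" "m = 2*t" | "p = 2*s+1" "m = 2*t+1"
      by blast
    then show ?thesis
    proof cases
      case 1 show ?thesis by (rule exI[of _ "2*s^2 - s - t^2*d"]) (simp add: 1 power2_eq_square algebra_simps)
    next
      case 2 show ?thesis by (rule exI[of _ "2*s^2 - s - (t^2+t)*d - 2*e - 2"]) (simp add: 2 d power2_eq_square algebra_simps)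
    next
      case 3 show ?thesis by (rule exI[of _ "2*s^2 + s - t^2*d"]) (simp add: 3 power2_eq_square algebra_simps)
    next
      case 4 show ?thesis by (rule exI[of _ "2*s^2 + s - (t^2+t)*d - 2*e - 2"]) (simp add: 4 d power2_eq_square algebra_simps)
    qed
  qed
  then obtain K where "2*p^2 - 2*p + 1 - m^2*d = 4*K+1 \<or> 2*p^2 - 2*p + 1 - m^2*d = 4*K+2" by blast
  then show "2*p^2 - 2*p + 1 - m^2*d \<noteq> 0" "2*p^2 - 2*p + 1 - m^2*d \<noteq> -1" by presburger+
qed



lemma map_poly_of_int_add: "map_poly (of_int::int\<Rightarrow>'a::comm_ring_1) (p + q) = map_poly of_int p + map_poly of_int q"
  by (intro poly_eqI) (simp add: coeff_map_poly)

lemma map_poly_of_int_mult: "map_poly (of_int::int\<Rightarrow>'a::comm_ring_1) (p * q) = map_poly of_int p * map_poly of_int q"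
  by (induction p) (simp_all add: map_poly_pCons map_poly_smult map_poly_of_int_add)

lemma map_poly_of_int_smult: "map_poly (of_int::int\<Rightarrow>'a::comm_ring_1) (smult a p) = smult (of_int a) (map_poly of_int p)"
  by (simp add: map_poly_smult)

lemma key:
  fixes A m M n :: int and r y :: real
  assumes r2: "r^2 = of_int n" and irr: "r \<notin> \<rat>" and MM: "M = A^2 - n*m^2" and m: "m \<noteq> 0"
    and M0: "M \<noteq> 0"
    and y: "y = (of_int A - of_int m * r) / of_int M" and ai: "algebraic_int y"
  shows "M dvd 1"
proof -
  obtain P where P: "poly (map_poly of_int P) y = 0" "lead_coeff P = 1"
    using ai algebraic_int_altdef_ipoly by blast
  define G where "G = [:1, -2*A, M:]"
  have G0: "G \<noteq> 0" using M0 by (simp add: G_def)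
  have degG: "degree G = 2" by (simp add: G_def M0)
  have lcG: "lead_coeff G = M" by (simp add: G_def M0)
  have "of_int M * y = of_int A - of_int m * r" using y M0 by simp
  have Gy: "poly (map_poly of_int G) y = 0"
  proof -
    have "of_int M * poly (map_poly of_int G) y = (of_int M * y)^2 - 2 * of_int A * (of_int M * y) + of_int M"
      by (simp add: G_def map_poly_pCons power2_eq_square algebra_simps)
    also have "\<dots> = 0"
      unfolding \<open>of_int M * y = of_int A - of_int m * r\<close> using r2
      by (simp add: MM power2_eq_square algebra_simps)
    finally show ?thesis using M0 by simp
  qed
  define Rm where "Rm = pseudo_mod P G"
  obtain a S where aS: "a \<noteq> 0" "smult a P = G * S + Rm"
    using pseudo_mod(1)[OF G0, of P] unfolding Rm_def by blast
  have Rdeg: "Rm = 0 \<or> degree Rm < 2" using pseudo_mod(2)[OF G0, of P] degG unfolding Rm_def by simp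
  have "poly (map_poly of_int (smult a P)) y = poly (map_poly of_int (G * S + Rm)) y"
    using aS by simp
  hence Ry: "poly (map_poly of_int Rm) y = 0"
    by (simp add: map_poly_of_int_mult map_poly_of_int_add map_poly_of_int_smult P Gy)
  have R0: "Rm = 0"
  proof -
    have "degree Rm \<le> 1" using Rdeg by auto
    define \<alpha> where "\<alpha> = coeff Rm 1"
    define \<beta> where "\<beta> = coeff Rm 0"
    have Rab: "Rm = [:\<beta>, \<alpha>:]"
    proof (intro poly_eqI)
      fix i show "coeff Rm i = coeff [:\<beta>, \<alpha>:] i"
        using \<open>degree Rm \<le> 1\<close> coeff_eq_0[of Rm i]
        by (cases i) (auto simp: \<alpha>_def \<beta>_def coeff_pCons split: nat.splits)
    qed
    have "of_int \<beta> + of_int \<alpha> * y = (0::real)" using Ry by (simp add: Rab map_poly_pCons mult.commute)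
    hence e: "of_int \<beta> * of_int M + of_int \<alpha> * (of_int A - of_int m * r) = (0::real)"
      using \<open>of_int M * y = of_int A - of_int m * r\<close>
      by (metis (no_types, opaque_lifting) distrib_left mult.commute mult.left_commute mult_zero_right)
    have "\<alpha> = 0"
    proof (rule ccontr)
      assume a0: "\<alpha> \<noteq> 0"
      have "r = (of_int \<beta> * of_int M + of_int \<alpha> * of_int A) / (of_int \<alpha> * of_int m)"
        using e a0 m by (simp add: field_simps)
      hence "r \<in> \<rat>" by simp
      with irr show False by simp
    qed
    with e M0 have "\<beta> = 0" by simp
    with \<open>\<alpha> = 0\<close> Rab show ?thesis by simp
  qed
  have S0: "S \<noteq> 0" using aS R0 P(2) by auto
  have "lead_coeff (smult a P) = a" using P(2) by simp
  hence lc: "a = M * lead_coeff S" using aS R0 lcG by (simp add: lead_coeff_mult)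
  have "content (smult a P) = content (G * S)" using aS R0 by simp
  moreover have "content P = 1"
  proof -
    have "content P dvd lead_coeff P" by simp
    with P(2) have "content P dvd 1" by simp
    thus ?thesis using is_unit_content_iff by blast
  qed
  moreover have "content G = 1" by (simp add: G_def content_def)
  ultimately have "content S = normalize a" by (simp add: content_mult)
  hence "a dvd lead_coeff S" by (metis content_dvd_coeff normalize_dvd_iff)
  hence "M * lead_coeff S dvd 1 * lead_coeff S" using lc by simp
  thus "M dvd 1" using S0 by (subst (asm) dvd_mult_cancel_right) auto
qed


lemma conj_scale_comp:
  assumes "qconj x = qscale k y" "c \<in> set (qcomps x)"
  shows "\<exists>w \<in> set (qcomps y). c = k * w \<or> - c = k * w"
  using assms by (cases x; cases y) (auto simp: qconj_def qscale_def qcomps_def)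

lemma quat_over_iff: "x \<in> quat_over R \<longleftrightarrow> set (qcomps x) \<subseteq> R"
  by (auto simp: quat_over_def qcomps_def)

lemma qcomps_conj: "set (qcomps (qconj x)) \<subseteq> set (qcomps x) \<union> uminus ` set (qcomps x)"
  by (cases x) (auto simp: qconj_def qcomps_def)

lemma divl:
  fixes N p :: int and w :: complex
  assumes "N \<noteq> 0" "algebraic_int w" "of_int p = of_int N * w \<or> - of_int p = of_int N * w"
  shows "N dvd p"
proof -
  have "w = of_int p / of_int N \<or> w = - of_int p / of_int N" using assms(1,3) by (auto simp: field_simps)
  hence "w \<in> \<rat>" by auto
  with assms(2) have "w \<in> \<int>" by (rule rational_algebraic_int_is_int)
  then obtain z where z: "w = of_int z" by (auto elim: Ints_cases)
  have "of_int p = (of_int (N * z) :: complex) \<or> of_int (-p) = (of_int (N * z) :: complex)"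
    using assms(3) z by simp
  hence "p = N * z \<or> -p = N * z" by (simp only: of_int_eq_iff)
  thus ?thesis by (metis dvdI dvd_minus_iff)
qed

lemma sqrt_neg_sq: "d > 0 \<Longrightarrow> sqrt_neg d ^ 2 = - of_int d"
proof -
  assume "d > 0"
  have "(complex_of_real (sqrt (real_of_int d)))^2 = complex_of_real (sqrt (real_of_int d) ^ 2)"
    by simp
  also have "\<dots> = of_int d" using \<open>d > 0\<close> by simp
  finally show ?thesis by (simp add: sqrt_neg_def power_mult_distrib)
qed

theorem mainTheorem16:
  fixes d p m :: int and a b c :: nat
  assumes "d > 0" and "squarefree d" and "d mod 8 = 7"
    and "a \<in> {0..3}" and "b \<in> {0..3}" and "c \<in> {0..3}"
    and "a \<noteq> b" and "a \<noteq> c" and "b \<noteq> c"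
  shows "qadd (qadd (qscale (of_int m * sqrt_neg d) (qbasis a)) (qscale (of_int p) (qbasis b)))
              (qscale (of_int (1 - p)) (qbasis c))
           \<in> quat_units (imag_ring_of_integers d)
     \<longleftrightarrow> (of_int (2 * p - 1) + of_int m * sqrt (real_of_int (2 * d)))
           \<in> ring_units (real_ring_of_integers (2 * d))"
proof -
  define s where "s = sqrt_neg d"
  define R where "R = imag_ring_of_integers d"
  define N where "N = 2*p^2 - 2*p + 1 - m^2*d"
  define u where "u = qadd (qadd (qscale (of_int m * s) (qbasis a)) (qscale (of_int p) (qbasis b)))
              (qscale (of_int (1 - p)) (qbasis c))"
  have N0: "N \<noteq> 0" and N1: "N \<noteq> -1" using parity[OF assms(3)] by (auto simp: N_def)
  note cl = comp_lemma[OF assms(4-9), where tA = "of_int m * s" and tB = "of_int p" and tC = "of_int (1-p)", folded u_def]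
  have s2: "s^2 = - of_int d" using sqrt_neg_sq[OF assms(1)] by (simp add: s_def)
  have "qnorm u = (of_int m)^2 * s^2 + (of_int p)^2 + (of_int (1-p))^2"
    using cl(4) by (simp add: power_mult_distrib)
  also have "\<dots> = of_int (m^2 * (-d) + p^2 + (1-p)^2)" unfolding s2 by simp
  also have "m^2 * (-d) + p^2 + (1-p)^2 = N" by (simp add: N_def power2_eq_square algebra_simps)
  finally have normu: "qnorm u = of_int N" .
  have intR: "of_int k \<in> R" for k
  proof -
    have "of_int k = of_rat (of_int k) + of_rat 0 * sqrt_neg d" by (simp add: of_rat_of_int_eq)
    thus ?thesis unfolding R_def imag_ring_of_integers_def imag_field_def by blast
  qed
  have negR: "- x \<in> R" if "x \<in> R" for x
  proof -
    from that obtain a' b' where "x = of_rat a' + of_rat b' * sqrt_neg d" "algebraic_int x"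
      unfolding R_def imag_ring_of_integers_def imag_field_def by auto
    hence "- x = of_rat (-a') + of_rat (-b') * sqrt_neg d" "algebraic_int (-x)"
      by (simp add: of_rat_minus, simp only: algebraic_int_minus_iff)
    thus ?thesis unfolding R_def imag_ring_of_integers_def imag_field_def by blast
  qed
  have tAR: "of_int m * s \<in> R"
  proof -
    have "algebraic_int (of_int m * s)"
    proof (rule algebraic_int_root[where p = "monom 1 2" and y = "of_int (- (m^2 * d))"])
      show "poly (monom 1 2) (of_int m * s) = of_int (- (m^2 * d))"
        using s2 by (simp add: poly_monom power_mult_distrib)
    qed (auto simp: degree_monom_eq simp del: of_int_minus of_int_mult of_int_power)
    moreover have "of_int m * s \<in> imag_field d"
    proof -
      have "of_int m * s = of_rat 0 + of_rat (of_int m) * sqrt_neg d" by (simp add: s_def of_rat_of_int_eq)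
      thus ?thesis unfolding imag_field_def by blast
    qed
    ultimately show ?thesis by (simp add: R_def imag_ring_of_integers_def)
  qed
  have compsR: "set (qcomps u) \<subseteq> R" using cl(1) tAR intR[of 0] intR[of p] intR[of "1-p"] by auto
  have Q: "u \<in> quat_units R \<longleftrightarrow> N = 1"
  proof
    assume "u \<in> quat_units R"
    then obtain y where y: "y \<in> quat_over R" "qmult u y = qone" by (auto simp: quat_units_def)
    have cu: "qconj u = qscale (of_int N) y"
      using qmult_conj_assoc[of u y] y(2) normu by (simp add: qmult_one)
    have yR: "set (qcomps y) \<subseteq> R" using y(1) quat_over_iff by blast
    have ai: "algebraic_int w" if "w \<in> R" for w using that by (simp add: R_def imag_ring_of_integers_def)
    have d1: "N dvd p"
    proof -
      obtain w where "w \<in> set (qcomps y)" "of_int p = of_int N * w \<or> - of_int p = of_int N * w"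
        using conj_scale_comp[OF cu cl(2)] by blast
      thus ?thesis using divl[OF N0] ai yR by blast
    qed
    have d2: "N dvd (1-p)"
    proof -
      obtain w where "w \<in> set (qcomps y)" "of_int (1-p) = of_int N * w \<or> - of_int (1-p) = of_int N * w"
        using conj_scale_comp[OF cu cl(3)] by blast
      thus ?thesis using divl[OF N0] ai yR by blast
    qed
    have "N dvd 1" using dvd_add[OF d1 d2] by simp
    thus "N = 1" using N1 by (simp add: zdvd1_eq abs_if split: if_splits)
  next
    assume "N = 1"
    have "set (qcomps (qconj u)) \<subseteq> R" using qcomps_conj[of u] compsR negR by blast
    hence "qconj u \<in> quat_over R" by (simp add: quat_over_iff)
    moreover have "u \<in> quat_over R" using compsR by (simp add: quat_over_iff)
    moreover have "qmult u (qconj u) = qone" "qmult (qconj u) u = qone"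
      using qmult_conj[of u] qmult_conj2[of u] normu \<open>N = 1\<close> by (simp_all add: qone_def)
    ultimately show "u \<in> quat_units R" by (auto simp: quat_units_def)
  qed
  define n where "n = 2*d"
  define r where "r = sqrt (real_of_int n)"
  define L where "L = real_ring_of_integers (2*d)"
  define A where "A = 2*p - 1"
  define M where "M = A^2 - n*m^2"
  have MN: "M = 2*N - 1" by (simp add: M_def N_def A_def n_def power2_eq_square algebra_simps)
  have r2: "r^2 = of_int n" using assms(1) by (simp add: r_def n_def)
  have irr: "r \<notin> \<rat>"
  proof
    assume "r \<in> \<rat>"
    moreover have "algebraic_int r" unfolding r_def by (intro algebraic_int_sqrt) simp
    ultimately have "r \<in> \<int>" using rational_algebraic_int_is_int by blast
    then obtain k where k: "r = of_int k" by (auto elim: Ints_cases)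
    have "of_int (k^2) = (of_int n :: real)" using r2 k by simp
    hence kk: "k^2 = 2*d" unfolding n_def by (simp only: of_int_eq_iff)
    hence "even (k^2)" by simp
    hence "even k" by simp
    then obtain j where "k = 2*j" by blast
    with kk have "d = 2*(j*j)" by (simp add: power2_eq_square)
    with assms(3) show False by presburger
  qed
  have aiL: "algebraic_int (of_int A' + of_int m' * r)" for A' m'
  proof -
    have "poly (map_poly of_int [:A'^2 - n*m'^2, -2*A', 1:]) (of_int A' + of_int m' * r) = 0"
      using r2 by (simp add: map_poly_pCons power2_eq_square algebra_simps)
    moreover have "lead_coeff [:A'^2 - n*m'^2, -2*A', 1:] = 1" by simp
    ultimately show ?thesis using algebraic_int_altdef_ipoly by blast
  qed
  have inL: "of_int A' + of_int m' * r \<in> L" for A' m'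
  proof -
    have "of_int A' + of_int m' * r = of_rat (of_int A') + of_rat (of_int m') * sqrt (real_of_int (2*d))"
      by (simp add: r_def n_def of_rat_of_int_eq)
    thus ?thesis unfolding L_def real_ring_of_integers_def real_field_def using aiL[of A' m'] by blast
  qed
  have prod: "(of_int A + of_int m * r) * (of_int A + of_int (-m) * r) = of_int M"
    using r2 by (simp add: M_def power2_eq_square algebra_simps)
  have Rl: "of_int A + of_int m * r \<in> ring_units L \<longleftrightarrow> N = 1"
  proof
    assume "of_int A + of_int m * r \<in> ring_units L"
    then obtain y where y: "y \<in> L" "(of_int A + of_int m * r) * y = 1" by (auto simp: ring_units_def)
    have ay: "algebraic_int y" using y(1) by (simp add: L_def real_ring_of_integers_def)
    have "M dvd 1"
    proof (cases "m = 0")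
      case True
      hence "of_int A * y = 1" using y(2) by simp
      moreover have "A \<noteq> 0" unfolding A_def by presburger
      ultimately have "y = 1 / of_int A" by (simp add: field_simps)
      hence "y \<in> \<rat>" by simp
      hence "y \<in> \<int>" using ay rational_algebraic_int_is_int by blast
      then obtain z where z: "y = of_int z" by (auto elim: Ints_cases)
      have "of_int (A * z) = (of_int 1 :: real)" using \<open>of_int A * y = 1\<close> z by simp
      hence "A * z = 1" by (simp only: of_int_eq_iff)
      hence "A dvd 1" by (metis dvdI)
      hence "A * A dvd 1 * 1" using mult_dvd_mono by blast
      thus "M dvd 1" using True by (simp add: M_def power2_eq_square)
    next
      case False
      have M0: "M \<noteq> 0" using MN by presburger
      have "y = y * ((of_int A + of_int m * r) * (of_int A + of_int (-m) * r)) / of_int M"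
        using prod M0 by simp
      also have "\<dots> = ((of_int A + of_int m * r) * y) * (of_int A + of_int (-m) * r) / of_int M"
        by (simp only: ac_simps)
      also have "\<dots> = (of_int A - of_int m * r) / of_int M"
        using y(2) by simp
      finally show "M dvd 1"
        using key[OF r2 irr M_def False M0 _ ay] by simp
    qed
    thus "N = 1" using MN N0 by (simp add: zdvd1_eq abs_if split: if_splits)
  next
    assume "N = 1"
    hence "(of_int A + of_int m * r) * (of_int A + of_int (-m) * r) = 1" using prod MN by simp
    thus "of_int A + of_int m * r \<in> ring_units L"
      using inL[of A m] inL[of A "-m"] by (auto simp: ring_units_def)
  qed
  show ?thesis
    using Q Rl by (simp add: u_def s_def R_def L_def A_def r_def n_def)
qed

end
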